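(* Let $G=[G^{(1)},\dots,G^{(p)}]\in\mathbb{R}^{n\times m}$ with $G^{(i)}\in\mathbb{R}^{n\times k_i}$ and $G^\top G=nI_m$, let $\sigma^2>0$, let $\bar\theta=[\bar\theta^{(1)\top},\dots,\bar\theta^{(p)\top}]^\top\in\mathbb{R}^m$ be fixed and $y=G\bar\theta+v$ with $v\sim\mathcal N(0,\sigma^2I_n)$. For $\lambda\in\mathbb{R}_+^p$ let $\Lambda=\mathrm{blockdiag}(\lambda_1I_{k_1},\dots,\lambda_pI_{k_p})$, $\hat\theta(\lambda)=\Lambda G^\top(G\Lambda G^\top+\sigma^2I_n)^{-1}y$ and $MSE(\lambda)=\mathrm{tr}\,\mathbb{E}_v[(\hat\theta(\lambda)-\bar\theta)(\hat\theta(\lambda)-\bar\theta)^\top]$. Then $MSE(\lambda)$ is globally minimized by choosing $$\lambda_i=\lambda_i^{opt}:=\frac{\|\bar\theta^{(i)}\|^2}{k_i},\qquad i=1,\dots,p.$$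
   Context: $\mathbb{E}_v$ denotes expectation with respect to the noise $v$ only, with $\lambda$ and $\bar\theta$ fixed. $\mathbb{R}_+=[0,\infty)$; $\|\cdot\|$ is the Euclidean norm. *)

theory Defs
  imports "HOL-Probability.Probability"
begin

text \<open>Note: normal_density mu s takes the standard deviation s, so the variance is s^2.\<close>
definition noise_measure :: "real \<Rightarrow> ('n::finite \<Rightarrow> real) measure" where
  "noise_measure s = PiM UNIV (\<lambda>_. density lborel (normal_density 0 s))"

definition outer_prod :: "real^'m \<Rightarrow> real^'m^'m" where
  "outer_prod x = (\<chi> i j. x $ i * x $ j)"

text \<open>Block-diagonal regularisation matrix Lambda = blockdiag(lambda_1 I_{k_1},...,lambda_p I_{k_p});
  blk j is the index of the block containing column/coordinate j.\<close>
definition Lam :: "('m::finite \<Rightarrow> 'p) \<Rightarrow> ('p \<Rightarrow> real) \<Rightarrow> real^'m^'m" where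
  "Lam blk lam = (\<chi> i j. if i = j then lam (blk i) else 0)"

definition theta_hat ::
  "real^'m^'n \<Rightarrow> ('m::finite \<Rightarrow> 'p) \<Rightarrow> real \<Rightarrow> ('p \<Rightarrow> real) \<Rightarrow> real^'n \<Rightarrow> real^'m" where
  "theta_hat G blk s lam y =
     (Lam blk lam ** transpose G **
        matrix_inv (G ** Lam blk lam ** transpose G + (s^2) *\<^sub>R mat 1)) *v y"

definition MSE ::
  "real^'m^'n \<Rightarrow> ('m::finite \<Rightarrow> 'p) \<Rightarrow> real \<Rightarrow> real^'m \<Rightarrow> ('p \<Rightarrow> real) \<Rightarrow> real" where
  "MSE G blk s theta_bar lam =
     trace (integral\<^sup>L (noise_measure s)
       (\<lambda>v::'n::finite \<Rightarrow> real. outer_prod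
          (theta_hat G blk s lam (G *v theta_bar + (\<chi> i. v i)) - theta_bar)))"

definition lam_opt :: "('m::finite \<Rightarrow> 'p) \<Rightarrow> real^'m \<Rightarrow> 'p \<Rightarrow> real" where
  "lam_opt blk theta_bar i =
     (\<Sum>j\<in>{j. blk j = i}. (theta_bar $ j)^2) / real (card {j. blk j = i})"

end

theory Submission
  imports Defs
begin


lemma N_int:
  assumes "s > 0"
  shows "integrable (density lborel (normal_density 0 s)) (\<lambda>x::real. x ^ k)"
  using integrable_normal_moment[OF assms, of 0 k]
  by (subst integrable_density) auto

lemma N_mom0: "s > 0 \<Longrightarrow> integral\<^sup>L (density lborel (normal_density 0 s)) (\<lambda>x::real. x ^ 0) = 1"
  by (subst integral_density) auto

lemma N_mom1: "s > 0 \<Longrightarrow> integral\<^sup>L (density lborel (normal_density 0 s)) (\<lambda>x::real. x ^ 1) = 0"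
  using integral_normal_moment_odd[of s 0 0]
  by (subst integral_density) auto

lemma N_mom2: "s > 0 \<Longrightarrow> integral\<^sup>L (density lborel (normal_density 0 s)) (\<lambda>x::real. x ^ 2) = s^2"
  using integral_normal_moment_even[of s 0 1]
  by (subst integral_density) (auto simp: power2_eq_square)

lemma N_simps:
  assumes "s > 0"
  shows "integral\<^sup>L (density lborel (normal_density 0 s)) (\<lambda>x::real. x) = 0"
    "integral\<^sup>L (density lborel (normal_density 0 s)) (\<lambda>x::real. x * x) = s^2"
    "Sigma_Algebra.measure (density lborel (normal_density 0 s)) UNIV = 1"
  using N_mom1[OF assms] N_mom2[OF assms] N_mom0[OF assms]
  by (simp_all add: power2_eq_square)

lemma Pi_prod:
  fixes c :: "'n::finite \<Rightarrow> nat"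
  assumes "s > 0"
  shows "integrable (noise_measure s :: ('n \<Rightarrow> real) measure) (\<lambda>v. \<Prod>i\<in>UNIV. v i ^ c i)"
    "integral\<^sup>L (noise_measure s :: ('n \<Rightarrow> real) measure) (\<lambda>v. \<Prod>i\<in>UNIV. v i ^ c i)
       = (\<Prod>i\<in>UNIV. integral\<^sup>L (density lborel (normal_density 0 s)) (\<lambda>x::real. x ^ c i))"
proof -
  interpret N: prob_space "density lborel (normal_density 0 s)"
    using prob_space_normal_density[OF assms] .
  interpret product_sigma_finite "\<lambda>_::'n. density lborel (normal_density 0 s)"
    by unfold_locales
  show "integrable (noise_measure s :: ('n \<Rightarrow> real) measure) (\<lambda>v. \<Prod>i\<in>UNIV. v i ^ c i)"
    unfolding noise_measure_def
    using product_integrable_prod[of UNIV "\<lambda>i x. x ^ c i"] N_int[OF assms] by auto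
  show "integral\<^sup>L (noise_measure s :: ('n \<Rightarrow> real) measure) (\<lambda>v. \<Prod>i\<in>UNIV. v i ^ c i)
       = (\<Prod>i\<in>UNIV. integral\<^sup>L (density lborel (normal_density 0 s)) (\<lambda>x::real. x ^ c i))"
    unfolding noise_measure_def
    using product_integral_prod[of UNIV "\<lambda>i x. x ^ c i"] N_int[OF assms] by auto
qed

lemma noise_prob: "s > 0 \<Longrightarrow> prob_space (noise_measure s :: ('n::finite \<Rightarrow> real) measure)"
  unfolding noise_measure_def by (rule prob_space_PiM) (rule prob_space_normal_density)

lemma mom1:
  fixes k :: "'n::finite"
  assumes "s > 0"
  shows "integrable (noise_measure s :: ('n \<Rightarrow> real) measure) (\<lambda>v. v k)"
    "integral\<^sup>L (noise_measure s :: ('n \<Rightarrow> real) measure) (\<lambda>v. v k) = 0"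
proof -
  define c where "c = (\<lambda>i. if i = k then 1 else (0::nat))"
  have e: "(\<Prod>i\<in>UNIV. v i ^ c i) = v k" for v :: "'n \<Rightarrow> real"
    unfolding c_def by (simp add: if_distrib cong: if_cong)
  show "integrable (noise_measure s :: ('n \<Rightarrow> real) measure) (\<lambda>v. v k)"
    using Pi_prod(1)[OF assms, of c] by (simp add: e)
  have "integral\<^sup>L (noise_measure s :: ('n \<Rightarrow> real) measure) (\<lambda>v. v k)
     = (\<Prod>i\<in>UNIV. integral\<^sup>L (density lborel (normal_density 0 s)) (\<lambda>x::real. x ^ c i))"
    using Pi_prod(2)[OF assms, of c] by (simp add: e)
  also have "\<dots> = 0"
  proof (rule Groups_Big.prod_zero)
    show "finite (UNIV::'n set)" by simp
    show "\<exists>a\<in>UNIV. integral\<^sup>L (density lborel (normal_density 0 s)) (\<lambda>x::real. x ^ c a) = 0"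
      by (rule bexI[of _ k]) (auto simp: c_def N_simps[OF assms])
  qed
  finally show "integral\<^sup>L (noise_measure s :: ('n \<Rightarrow> real) measure) (\<lambda>v. v k) = 0" .
qed

lemma mom2:
  fixes k l :: "'n::finite"
  assumes "s > 0"
  shows "integrable (noise_measure s :: ('n \<Rightarrow> real) measure) (\<lambda>v. v k * v l)"
    "integral\<^sup>L (noise_measure s :: ('n \<Rightarrow> real) measure) (\<lambda>v. v k * v l) = (if k = l then s^2 else 0)"
proof -
  define c where "c = (\<lambda>i. (if i = k then 1 else (0::nat)) + (if i = l then 1 else 0))"
  have e: "(\<Prod>i\<in>UNIV. v i ^ c i) = v k * v l" for v :: "'n \<Rightarrow> real"
    unfolding c_def power_add prod.distrib by (simp add: if_distrib cong: if_cong)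
  show "integrable (noise_measure s :: ('n \<Rightarrow> real) measure) (\<lambda>v. v k * v l)"
    using Pi_prod(1)[OF assms, of c] by (simp add: e)
  have "integral\<^sup>L (noise_measure s :: ('n \<Rightarrow> real) measure) (\<lambda>v. v k * v l)
     = (\<Prod>i\<in>UNIV. integral\<^sup>L (density lborel (normal_density 0 s)) (\<lambda>x::real. x ^ c i))"
    using Pi_prod(2)[OF assms, of c] by (simp add: e)
  also have "\<dots> = (if k = l then s^2 else 0)"
  proof (cases "k = l")
    case True
    have "(\<Prod>i\<in>UNIV. integral\<^sup>L (density lborel (normal_density 0 s)) (\<lambda>x::real. x ^ c i))
       = (\<Prod>i\<in>UNIV. if i = k then s^2 else 1)"
      by (rule prod.cong) (auto simp: c_def True N_simps[OF assms])
    then show ?thesis using True by simp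
  next
    case False
    have "(\<Prod>i\<in>UNIV. integral\<^sup>L (density lborel (normal_density 0 s)) (\<lambda>x::real. x ^ c i)) = 0"
    proof (rule Groups_Big.prod_zero)
      show "finite (UNIV::'n set)" by simp
    show "\<exists>a\<in>UNIV. integral\<^sup>L (density lborel (normal_density 0 s)) (\<lambda>x::real. x ^ c a) = 0"
        by (rule bexI[of _ k]) (auto simp: c_def False N_simps[OF assms])
    qed
    then show ?thesis using False by simp
  qed
  finally show "integral\<^sup>L (noise_measure s :: ('n \<Rightarrow> real) measure) (\<lambda>v. v k * v l) = (if k = l then s^2 else 0)" .
qed

lemma aff:
  fixes b b' :: "'n::finite \<Rightarrow> real"
  assumes "s > 0"
  shows "integrable (noise_measure s :: ('n \<Rightarrow> real) measure)
            (\<lambda>v. (a + (\<Sum>k\<in>UNIV. b k * v k)) * (a' + (\<Sum>k\<in>UNIV. b' k * v k)))"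
    "integral\<^sup>L (noise_measure s :: ('n \<Rightarrow> real) measure)
            (\<lambda>v. (a + (\<Sum>k\<in>UNIV. b k * v k)) * (a + (\<Sum>k\<in>UNIV. b k * v k)))
       = a^2 + s^2 * (\<Sum>k\<in>UNIV. (b k)^2)"
proof -
  interpret prob_space "noise_measure s :: ('n \<Rightarrow> real) measure" using noise_prob[OF assms] .
  have eq: "(a + (\<Sum>k\<in>UNIV. b k * v k)) * (a' + (\<Sum>k\<in>UNIV. b' k * v k))
     = a * a' + (\<Sum>k\<in>UNIV. (a * b' k) * v k) + (\<Sum>k\<in>UNIV. (a' * b k) * v k)
       + (\<Sum>k\<in>UNIV. \<Sum>l\<in>UNIV. (b k * b' l) * (v k * v l))" for a a' b b' and v :: "'n \<Rightarrow> real"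
    by (simp add: algebra_simps sum_distrib_left sum_product sum.distrib)
  note m1 = mom1[OF assms] and m2 = mom2[OF assms]
  have ic: "integrable (noise_measure s :: ('n \<Rightarrow> real) measure) (\<lambda>_. c)" for c :: real by simp
  have I: "integrable (noise_measure s :: ('n \<Rightarrow> real) measure)
     (\<lambda>v. a * a' + (\<Sum>k\<in>UNIV. (a * b' k) * v k) + (\<Sum>k\<in>UNIV. (a' * b k) * v k)
       + (\<Sum>k\<in>UNIV. \<Sum>l\<in>UNIV. (b k * b' l) * (v k * v l)))" for a a' b b'
    by (intro Bochner_Integration.integrable_add Bochner_Integration.integrable_sum
        Bochner_Integration.integrable_mult_right m1(1) m2(1) ic)
  show "integrable (noise_measure s :: ('n \<Rightarrow> real) measure)
            (\<lambda>v. (a + (\<Sum>k\<in>UNIV. b k * v k)) * (a' + (\<Sum>k\<in>UNIV. b' k * v k)))"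
    unfolding eq by (rule I)
  have "integral\<^sup>L (noise_measure s :: ('n \<Rightarrow> real) measure)
            (\<lambda>v. (a + (\<Sum>k\<in>UNIV. b k * v k)) * (a + (\<Sum>k\<in>UNIV. b k * v k)))
     = a * a + (\<Sum>k\<in>UNIV. (a * b k) * 0) + (\<Sum>k\<in>UNIV. (a * b k) * 0)
       + (\<Sum>k\<in>UNIV. \<Sum>l\<in>UNIV. (b k * b l) * (if k = l then s^2 else 0))"
    unfolding eq
    by (simp add: Bochner_Integration.integral_add Bochner_Integration.integral_sum Bochner_Integration.integrable_add Bochner_Integration.integrable_sum Bochner_Integration.integral_mult_right m1 m2 prob_space del: sum_distrib_left)
  also have "\<dots> = a^2 + s^2 * (\<Sum>k\<in>UNIV. (b k)^2)"
    by (simp add: power2_eq_square sum_distrib_left mult_ac if_distrib cong: if_cong)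
  finally show "integral\<^sup>L (noise_measure s :: ('n \<Rightarrow> real) measure)
            (\<lambda>v. (a + (\<Sum>k\<in>UNIV. b k * v k)) * (a + (\<Sum>k\<in>UNIV. b k * v k)))
       = a^2 + s^2 * (\<Sum>k\<in>UNIV. (b k)^2)" .
qed

lemma dsum:
  fixes f :: "'a::finite \<Rightarrow> 'b::finite \<Rightarrow> 'c::comm_monoid_add"
  shows "(\<Sum>x\<in>UNIV. \<Sum>y\<in>UNIV. if i = x \<and> j = y then f x y else 0) = f i j"
proof -
  have "(\<Sum>x\<in>UNIV. \<Sum>y\<in>UNIV. if i = x \<and> j = y then f x y else 0) = (\<Sum>x\<in>UNIV. if i = x then f x j else 0)"
    by (rule sum.cong[OF refl], case_tac "i = x") auto
  then show ?thesis by simp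
qed

lemma trace_int:
  fixes e :: "('n::finite \<Rightarrow> real) \<Rightarrow> real^'m::finite" and a :: "'m \<Rightarrow> real"
    and B :: "'m \<Rightarrow> 'n \<Rightarrow> real"
  assumes s: "s > 0" and he: "\<And>v j. e v $ j = a j + (\<Sum>k\<in>UNIV. B j k * v k)"
  shows "trace (integral\<^sup>L (noise_measure s) (\<lambda>v. outer_prod (e v)))
     = (\<Sum>j\<in>UNIV. (a j)^2 + s^2 * (\<Sum>k\<in>UNIV. (B j k)^2))"
proof -
  define E :: "'m \<Rightarrow> 'm \<Rightarrow> real^'m^'m" where "E i j = (\<chi> a b. if a = i \<and> b = j then 1 else 0)" for i j
  have op: "outer_prod (e v) = (\<Sum>i\<in>UNIV. \<Sum>j\<in>UNIV. (e v $ i * e v $ j) *\<^sub>R E i j)" for v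
    by (simp add: vec_eq_iff outer_prod_def E_def if_distrib dsum cong: if_cong)
  have int: "integrable (noise_measure s) (\<lambda>v. e v $ i * e v $ j)" for i j
    unfolding he by (rule aff(1)[OF s])
  have "integral\<^sup>L (noise_measure s) (\<lambda>v. outer_prod (e v))
      = (\<Sum>i\<in>UNIV. \<Sum>j\<in>UNIV. integral\<^sup>L (noise_measure s) (\<lambda>v. e v $ i * e v $ j) *\<^sub>R E i j)"
    unfolding op
    by (simp add: Bochner_Integration.integral_sum Bochner_Integration.integrable_sum int)
  then have "trace (integral\<^sup>L (noise_measure s) (\<lambda>v. outer_prod (e v)))
      = (\<Sum>i\<in>UNIV. integral\<^sup>L (noise_measure s) (\<lambda>v. e v $ i * e v $ i))"
    by (simp add: trace_def E_def if_distrib dsum cong: if_cong)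
  also have "\<dots> = (\<Sum>j\<in>UNIV. (a j)^2 + s^2 * (\<Sum>k\<in>UNIV. (B j k)^2))"
    unfolding he by (rule sum.cong[OF refl], rule aff(2)[OF s])
  finally show ?thesis .
qed



lemma mm_add_r: "((A::real^'n^'m) + B) ** (C::real^'p^'n) = A ** C + B ** C"
  by (simp add: matrix_matrix_mult_def vec_eq_iff algebra_simps sum.distrib)
lemma mm_add_l: "(A::real^'n^'m) ** ((B::real^'p^'n) + C) = A ** B + A ** C"
  by (simp add: matrix_matrix_mult_def vec_eq_iff algebra_simps sum.distrib)
lemma mm_diff_r: "((A::real^'n^'m) - B) ** (C::real^'p^'n) = A ** C - B ** C"
  by (simp add: matrix_matrix_mult_def vec_eq_iff algebra_simps sum_subtractf)
lemma mm_diff_l: "(A::real^'n^'m) ** ((B::real^'p^'n) - C) = A ** B - A ** C"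
  by (simp add: matrix_matrix_mult_def vec_eq_iff algebra_simps sum_subtractf)
lemma mm_scale_l: "(k *\<^sub>R (A::real^'n^'m)) ** (C::real^'p^'n) = k *\<^sub>R (A ** C)"
  by (simp add: matrix_matrix_mult_def vec_eq_iff algebra_simps sum_distrib_left)
lemma mm_scale_r: "(A::real^'n^'m) ** (k *\<^sub>R (C::real^'p^'n)) = k *\<^sub>R (A ** C)"
  by (simp add: matrix_matrix_mult_def vec_eq_iff algebra_simps sum_distrib_left)

lemma diag_mult:
  "(\<chi> i j. if i = j then a i else 0) ** (\<chi> i j. if i = j then b i else (0::real)) =
   (\<chi> i j. if i = j then a i * b i else (0::real)::real^'m::finite^'m)"
proof -
  have "(\<Sum>k\<in>UNIV. (if i = k then a i else 0) * (if k = j then b k else 0)) = (if i = j then a i * b i else (0::real))" for i j :: 'm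
  proof -
    have "(\<Sum>k\<in>UNIV. (if i = k then a i else 0) * (if k = j then b k else 0)) =
          (\<Sum>k\<in>UNIV. if k = i then (if i = j then a i * b i else 0) else (0::real))"
      by (rule sum.cong) auto
    then show ?thesis by simp
  qed
  then show ?thesis by (simp add: matrix_matrix_mult_def vec_eq_iff)
qed

lemma theta_err:
  fixes G :: "real^'m::finite^'n::finite" and blk :: "'m \<Rightarrow> 'p" and tb :: "real^'m"
  assumes GG: "transpose G ** G = real CARD('n) *\<^sub>R mat 1"
    and s: "s > 0" and lam: "\<forall>i. lam i \<ge> 0"
  shows "theta_hat G blk s lam (G *v tb + w) - tb =
     (\<chi> j. (real CARD('n) * (lam (blk j) / (real CARD('n) * lam (blk j) + s^2)) - 1) * tb $ j
           + (\<Sum>k\<in>UNIV. (lam (blk j) / (real CARD('n) * lam (blk j) + s^2) * G $ k $ j) * w $ k))"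
proof -
  define n where "n = real CARD('n)"
  define l where "l j = lam (blk j)" for j
  define d where "d j = l j / (n * l j + s^2)" for j
  define L where "L = Lam blk lam"
  define T where "T = transpose G"
  define D :: "real^'m^'m" where "D = (\<chi> i j. if i = j then d i else 0)"
  define M where "M = G ** L ** T + s^2 *\<^sub>R mat 1"
  define X where "X = (1/s^2) *\<^sub>R (mat 1 - G ** D ** T)"
  have npos: "n > 0" unfolding n_def by simp
  have lpos: "l j \<ge> 0" for j using lam unfolding l_def by auto
  have den: "n * l j + s^2 > 0" for j using npos lpos[of j] s
    by (metis add_nonneg_pos mult_nonneg_nonneg less_eq_real_def zero_less_power)
  have GTG: "T ** G = n *\<^sub>R mat 1" using GG unfolding T_def n_def .
  have F1: "L = n *\<^sub>R (L ** D) + s^2 *\<^sub>R D"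
  proof -
    have "l i = n * (l i * d i) + s^2 * d i" for i
    proof -
      have "(n * l i + s^2) * d i = l i" using den[of i] unfolding d_def by simp
      then show ?thesis by (simp add: algebra_simps)
    qed
    then show ?thesis
      unfolding L_def D_def Lam_def diag_mult
      by (simp add: vec_eq_iff l_def)
  qed
  have step1: "M ** (G ** D ** T) = G ** L ** T"
  proof -
    have "M ** (G ** D ** T) = (G ** L ** T) ** (G ** D ** T) + s^2 *\<^sub>R (G ** D ** T)"
      by (simp add: M_def mm_add_r mm_scale_l)
    also have "(G ** L ** T) ** (G ** D ** T) = G ** L ** (T ** G) ** D ** T"
      by (simp add: matrix_mul_assoc)
    also have "\<dots> = n *\<^sub>R (G ** (L ** D) ** T)"
      by (simp add: GTG mm_scale_l mm_scale_r matrix_mul_assoc)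
    finally have "M ** (G ** D ** T) = G ** (n *\<^sub>R (L ** D) + s^2 *\<^sub>R D) ** T"
      by (simp add: mm_add_l mm_add_r mm_scale_l mm_scale_r matrix_mul_assoc)
    then show ?thesis using F1 by simp
  qed
  have MX: "M ** X = mat 1"
  proof -
    have "M ** X = (1/s^2) *\<^sub>R (M - G ** L ** T)"
      unfolding X_def by (simp add: mm_scale_r mm_diff_l step1)
    also have "M - G ** L ** T = s^2 *\<^sub>R mat 1" by (simp add: M_def)
    finally show ?thesis using s by simp
  qed
  have XM: "X ** M = mat 1" using MX matrix_left_right_inverse by blast
  have inv: "matrix_inv M = X"
  proof -
    have ex: "\<exists>A'. M ** A' = mat 1 \<and> A' ** M = mat 1" using MX XM by blast
    have "M ** matrix_inv M = mat 1 \<and> matrix_inv M ** M = mat 1"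
      unfolding matrix_inv_def by (rule someI_ex[OF ex])
    then have "matrix_inv M = matrix_inv M ** (M ** X)" using MX by simp
    also have "\<dots> = X" by (simp add: matrix_mul_assoc \<open>_ \<and> _\<close>)
    finally show ?thesis .
  qed
  have LTX: "L ** T ** X = D ** T"
  proof -
    have "L ** T ** X = (1/s^2) *\<^sub>R (L ** T - L ** (T ** G) ** D ** T)"
      unfolding X_def by (simp add: mm_scale_r mm_diff_l matrix_mul_assoc)
    also have "L ** T - L ** (T ** G) ** D ** T = (L - n *\<^sub>R (L ** D)) ** T"
      by (simp add: GTG mm_scale_r mm_scale_l mm_diff_r matrix_mul_assoc)
    also have "L - n *\<^sub>R (L ** D) = s^2 *\<^sub>R D" using F1 by (simp add: algebra_simps)
    finally show ?thesis using s by (simp add: mm_scale_l)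
  qed
  have th: "theta_hat G blk s lam y = D *v (T *v y)" for y
    unfolding theta_hat_def
    by (simp add: L_def[symmetric] T_def[symmetric] M_def[symmetric] inv LTX matrix_vector_mul_assoc)
  have Dv: "(D *v x) $ j = d j * x $ j" for x j
  proof -
    have "(\<Sum>k\<in>UNIV. (if j = k then d j else 0) * x $ k) = (\<Sum>k\<in>UNIV. if k = j then d j * x $ j else 0)"
      by (rule sum.cong) auto
    then show ?thesis by (simp add: D_def matrix_vector_mult_def)
  qed
  have TGtb: "T *v (G *v tb) = n *\<^sub>R tb"
  proof -
    have "T *v (G *v tb) = (n *\<^sub>R mat 1) *v tb" by (simp add: matrix_vector_mul_assoc GTG)
    also have "\<dots> = n *\<^sub>R tb"
      by (metis matrix_vector_mul_lid scaleR_matrix_vector_assoc)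
    finally show ?thesis .
  qed
  have Tw: "(T *v w) $ j = (\<Sum>k\<in>UNIV. G $ k $ j * w $ k)" for j
    by (simp add: T_def matrix_vector_mult_def transpose_def)
  show ?thesis
    unfolding th
    by (simp add: vec_eq_iff matrix_vector_right_distrib Dv TGtb Tw sum_distrib_left sum_divide_distrib
         algebra_simps d_def l_def n_def)
qed



lemma blk_ineq:
  fixes n s k T l :: real
  assumes n: "n > 0" and s: "s > 0" and k: "k > 0" and T: "T \<ge> 0" and l: "l \<ge> 0"
  defines "F \<equiv> (\<lambda>x. (s^2 / (n * x + s^2))^2 * T + k * (s^2 * n * (x / (n * x + s^2))^2))"
  shows "F (T / k) \<le> F l"
proof -
  define a where "a = n * l + s^2"
  define b where "b = n * T + k * s^2"
  have a: "a > 0" unfolding a_def using n s l by (simp add: add_nonneg_pos)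
  have b: "b > 0" unfolding b_def using n s k T by (simp add: add_nonneg_pos)
  have e1: "n * (T / k) + s^2 = b / k" unfolding b_def using k by (simp add: field_simps)
  have L: "F (T / k) = k * s^2 * T / b"
  proof -
    have 1: "s^2 / (b / k) = s^2 * k / b" "(T / k) / (b / k) = T / b" using k by auto
    have "F (T / k) = (s^2 * k / b)^2 * T + k * (s^2 * n * (T / b)^2)"
      unfolding F_def e1 1 ..
    also have "\<dots> = k * s^2 * T * (n * T + k * s^2) / (b * b)"
      using b by (simp add: power2_eq_square field_simps)
    also have "\<dots> = k * s^2 * T / b" using b unfolding b_def[symmetric] by simp
    finally show ?thesis .
  qed
  have R: "F l = (s^4 * T + k * s^2 * n * l^2) / a^2"
    unfolding F_def a_def[symmetric] using a by (simp add: field_simps power2_eq_square power4_eq_xxxx)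
  have key: "k * T * a^2 \<le> (s^2 * T + k * n * l^2) * b"
  proof -
    have "(s^2 * T + k * n * l^2) * b - k * T * a^2 = n * s^2 * (T - k * l)^2"
      unfolding a_def b_def by (simp add: algebra_simps power2_eq_square)
    moreover have "n * s^2 * (T - k * l)^2 \<ge> 0" using n by simp
    ultimately show ?thesis by linarith
  qed
  have "k * s^2 * T / b \<le> (s^4 * T + k * s^2 * n * l^2) / a^2"
  proof -
    have "k * s^2 * T * a^2 \<le> (s^4 * T + k * s^2 * n * l^2) * b"
    proof -
      have "s^2 * (k * T * a^2) \<le> s^2 * ((s^2 * T + k * n * l^2) * b)"
        using key s by (intro mult_left_mono) auto
      then show ?thesis by (simp add: algebra_simps power2_eq_square power4_eq_xxxx)
    qed
    then show ?thesis using a b by (simp add: divide_simps)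
  qed
  then show ?thesis using L R by simp
qed


lemma mse_formula:
  fixes G :: "real^'m::finite^'n::finite" and blk :: "'m \<Rightarrow> 'p" and tb :: "real^'m"
  assumes GG: "transpose G ** G = real CARD('n) *\<^sub>R mat 1"
    and s: "s > 0" and lam: "\<forall>i. lam i \<ge> 0"
  shows "MSE G blk s tb lam = (\<Sum>j\<in>UNIV.
     (s^2 / (real CARD('n) * lam (blk j) + s^2))^2 * (tb $ j)^2
     + s^2 * real CARD('n) * (lam (blk j) / (real CARD('n) * lam (blk j) + s^2))^2)"
proof -
  define n where "n = real CARD('n)"
  define d where "d j = lam (blk j) / (n * lam (blk j) + s^2)" for j
  define a where "a j = (n * d j - 1) * tb $ j" for j
  define B where "B j k = d j * G $ k $ j" for j k
  define e where "e v = theta_hat G blk s lam (G *v tb + (\<chi> i. v i)) - tb" for v :: "'n \<Rightarrow> real"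
  have npos: "n > 0" unfolding n_def by simp
  have den: "n * lam (blk j) + s^2 > 0" for j using npos lam s
    by (metis add_nonneg_pos mult_nonneg_nonneg less_eq_real_def zero_less_power)
  have he: "e v $ j = a j + (\<Sum>k\<in>UNIV. B j k * v k)" for v j
    unfolding e_def theta_err[OF GG s lam] by (simp add: a_def B_def d_def n_def)
  have "MSE G blk s tb lam = trace (integral\<^sup>L (noise_measure s) (\<lambda>v. outer_prod (e v)))"
    unfolding MSE_def e_def ..
  also have "\<dots> = (\<Sum>j\<in>UNIV. (a j)^2 + s^2 * (\<Sum>k\<in>UNIV. (B j k)^2))"
    by (rule trace_int[OF s he])
  also have "\<dots> = (\<Sum>j\<in>UNIV.
     (s^2 / (n * lam (blk j) + s^2))^2 * (tb $ j)^2
     + s^2 * n * (lam (blk j) / (n * lam (blk j) + s^2))^2)"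
  proof (rule sum.cong[OF refl])
    fix j
    have col: "(\<Sum>k\<in>UNIV. (G $ k $ j)^2) = n"
    proof -
      have "(transpose G ** G) $ j $ j = n" using GG unfolding n_def by (simp add: mat_def)
      then show ?thesis by (simp add: matrix_matrix_mult_def transpose_def power2_eq_square)
    qed
    have "n * d j - 1 = - (s^2 / (n * lam (blk j) + s^2))"
      using den[of j] unfolding d_def by (simp add: field_simps)
    then have "(a j)^2 = (s^2 / (n * lam (blk j) + s^2))^2 * (tb $ j)^2"
      unfolding a_def by (simp add: power2_eq_square)
    moreover have "(\<Sum>k\<in>UNIV. (B j k)^2) = (d j)^2 * n"
      unfolding B_def by (simp add: power_mult_distrib sum_distrib_left[symmetric] col)
    ultimately show "(a j)^2 + s^2 * (\<Sum>k\<in>UNIV. (B j k)^2) =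
     (s^2 / (n * lam (blk j) + s^2))^2 * (tb $ j)^2
     + s^2 * n * (lam (blk j) / (n * lam (blk j) + s^2))^2"
      by (simp add: d_def)
  qed
  finally show ?thesis unfolding n_def .
qed

theorem corollary8:
  fixes G :: "real^'m::finite^'n::finite"
    and blk :: "'m \<Rightarrow> 'p::finite"
    and s :: real
    and theta_bar :: "real^'m"
  assumes "surj blk"
    and "transpose G ** G = real CARD('n) *\<^sub>R mat 1"
    and "s > 0"
  shows "(\<forall>i. lam_opt blk theta_bar i \<ge> 0) \<and>
         (\<forall>lam :: 'p \<Rightarrow> real. (\<forall>i. lam i \<ge> 0) \<longrightarrow>
            MSE G blk s theta_bar (lam_opt blk theta_bar) \<le> MSE G blk s theta_bar lam)"
proof -
  have opt0: "\<forall>i. lam_opt blk theta_bar i \<ge> 0"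
    unfolding lam_opt_def by (auto intro!: divide_nonneg_nonneg sum_nonneg)
  define n where "n = real CARD('n)"
  define F where "F x t = (s^2 / (n * x + s^2))^2 * t^2 + s^2 * n * (x / (n * x + s^2))^2" for x t
  define Bk where "Bk i = {j. j \<in> (UNIV::'m set) \<and> blk j = i}" for i
  define Tt where "Tt i = (\<Sum>j\<in>Bk i. (theta_bar $ j)^2)" for i
  define kk where "kk i = real (card (Bk i))" for i
  have npos: "n > 0" unfolding n_def by simp
  have grp: "MSE G blk s theta_bar lam = (\<Sum>i\<in>UNIV. (s^2 / (n * lam i + s^2))^2 * Tt i
                + kk i * (s^2 * n * (lam i / (n * lam i + s^2))^2))"
    if lam: "\<forall>i. lam i \<ge> 0" for lam
  proof -
    have "MSE G blk s theta_bar lam = (\<Sum>j\<in>UNIV. F (lam (blk j)) (theta_bar $ j))"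
      unfolding mse_formula[OF assms(2) assms(3) lam] F_def n_def ..
    also have "\<dots> = (\<Sum>i\<in>UNIV. \<Sum>j\<in>Bk i. F (lam (blk j)) (theta_bar $ j))"
      unfolding Bk_def by (rule sum.group[symmetric]) auto
    also have "\<dots> = (\<Sum>i\<in>UNIV. \<Sum>j\<in>Bk i. F (lam i) (theta_bar $ j))"
      by (rule sum.cong[OF refl], rule sum.cong[OF refl]) (simp add: Bk_def)
    also have "\<dots> = (\<Sum>i\<in>UNIV. (s^2 / (n * lam i + s^2))^2 * Tt i
                + kk i * (s^2 * n * (lam i / (n * lam i + s^2))^2))"
      by (simp add: F_def Tt_def kk_def sum.distrib sum_distrib_left)
    finally show ?thesis .
  qed
  have main: "MSE G blk s theta_bar (lam_opt blk theta_bar) \<le> MSE G blk s theta_bar lam"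
    if lam: "\<forall>i. lam i \<ge> 0" for lam
  proof -
    have lo: "lam_opt blk theta_bar i = Tt i / kk i" for i
      unfolding lam_opt_def Tt_def kk_def Bk_def by simp
    show ?thesis
      unfolding grp[OF lam] grp[OF opt0]
    proof (rule sum_mono)
      fix i
      have "Bk i \<noteq> {}" using assms(1) unfolding Bk_def by (metis (mono_tags) UNIV_I empty_Collect_eq surj_def)
      then have kpos: "kk i > 0" unfolding kk_def by (simp add: card_gt_0_iff)
      have "Tt i \<ge> 0" unfolding Tt_def by (simp add: sum_nonneg)
      from blk_ineq[OF npos assms(3) kpos this, of "lam i"] lam
      show "(s^2 / (n * lam_opt blk theta_bar i + s^2))^2 * Tt i
             + kk i * (s^2 * n * (lam_opt blk theta_bar i / (n * lam_opt blk theta_bar i + s^2))^2)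
           \<le> (s^2 / (n * lam i + s^2))^2 * Tt i + kk i * (s^2 * n * (lam i / (n * lam i + s^2))^2)"
        unfolding lo by simp
    qed
  qed
  show ?thesis using opt0 main by blast
qed

end
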